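(* Let $G(V,E)$ be any graph, $p\in(0,1)$, and let $\mathrm{OPT}=\mathbb{E}[\mu(G_p)]$. Then $G$ contains a $\lfloor 1/p\rfloor$-matching with at least $(\lfloor 1/p\rfloor-1)\cdot \mathrm{OPT}$ edges.
   Context: A realization $G_p$ of $G$ is the random subgraph obtained by keeping each edge of $G$ independently with probability $p$; $\mu(X)$ is the maximum matching size of a graph $X$. For an integer $b\ge 1$, a (simple) $b$-matching in $G$ is a subset of edges of $G$ such that every vertex is incident to at most $b$ of them; its size is its number of edges. *)

theory Defs
  imports Complex_Main
begin

definition simple_graph :: "'a set \<Rightarrow> 'a set set \<Rightarrow> bool" where
  "simple_graph V E \<longleftrightarrow> finite V \<and> (\<forall>e\<in>E. e \<subseteq> V \<and> card e = 2)"

definition b_matching :: "nat \<Rightarrow> 'a set set \<Rightarrow> bool" where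
  "b_matching b M \<longleftrightarrow> (\<forall>v. card {e\<in>M. v \<in> e} \<le> b)"

definition matching :: "'a set set \<Rightarrow> bool" where
  "matching M \<longleftrightarrow> (\<forall>v. card {e\<in>M. v \<in> e} \<le> 1)"

definition mu :: "'a set set \<Rightarrow> nat" where
  "mu X = Max {card M | M. M \<subseteq> X \<and> matching M}"

text \<open>Expected maximum matching size of the realization G_p: each edge kept
  independently with probability p.\<close>
definition expected_mu :: "'a set set \<Rightarrow> real \<Rightarrow> real" where
  "expected_mu E p = (\<Sum>F\<in>Pow E. p ^ card F * (1 - p) ^ card (E - F) * real (mu F))"

end

theory Submission imports Defs "HOL-Library.FuncSet" begin

lemma mu_attained:
  assumes "finite X"
  shows "\<exists>N\<subseteq>X. matching N \<and> card N = mu X"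
proof -
  let ?S = "{card M | M. M \<subseteq> X \<and> matching M}"
  have fin: "finite ?S" using assms by (simp add: finite_image_set)
  have "matching ({}::'a set set)" by (simp add: matching_def)
  hence "card ({}::'a set set) \<in> ?S" by blast
  hence ne: "?S \<noteq> {}" by blast
  have "mu X \<in> ?S" unfolding mu_def using Max_in[OF fin ne] .
  thus ?thesis by auto
qed

lemma combine:
  fixes E :: "'a set set" and c :: "'a set \<Rightarrow> nat"
  assumes fE: "finite E"
  shows "\<exists>M\<subseteq>E. b_matching b M \<and> card M = (\<Sum>i\<in>{1..b}. mu {e\<in>E. c e = i})"
proof -
  have ex: "\<exists>N. N \<subseteq> {e\<in>E. c e = i} \<and> matching N \<and> card N = mu {e\<in>E. c e = i}" for i
  proof -
    have "finite {e\<in>E. c e = i}" using fE by simp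
    from mu_attained[OF this] show ?thesis by blast
  qed
  define N where "N = (\<lambda>i. SOME N. N \<subseteq> {e\<in>E. c e = i} \<and> matching N \<and> card N = mu {e\<in>E. c e = i})"
  have PN: "N i \<subseteq> {e\<in>E. c e = i} \<and> matching (N i) \<and> card (N i) = mu {e\<in>E. c e = i}" for i
    unfolding N_def by (rule someI_ex[OF ex])
  hence N: "\<And>i. N i \<subseteq> {e\<in>E. c e = i}" "\<And>i. matching (N i)"
    "\<And>i. card (N i) = mu {e\<in>E. c e = i}" by auto
  define M where "M = (\<Union>i\<in>{1..b}. N i)"
  have finN: "\<And>i. finite (N i)" 
  proof -
    fix i show "finite (N i)" by (rule finite_subset[OF N(1)]) (use fE in simp)
  qed
  have disj: "\<And>i j. i \<noteq> j \<Longrightarrow> N i \<inter> N j = {}" using N(1) by blast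
  have sub: "M \<subseteq> E" unfolding M_def using N(1) by blast
  have "card M = (\<Sum>i\<in>{1..b}. card (N i))"
    unfolding M_def by (rule card_UN_disjoint) (use finN disj in auto)
  hence cardM: "card M = (\<Sum>i\<in>{1..b}. mu {e\<in>E. c e = i})" using N(3) by simp
  have "b_matching b M"
    unfolding b_matching_def
  proof
    fix v
    have eq: "{e\<in>M. v \<in> e} = (\<Union>i\<in>{1..b}. {e\<in>N i. v \<in> e})" unfolding M_def by blast
    have "card {e\<in>M. v \<in> e} = (\<Sum>i\<in>{1..b}. card {e\<in>N i. v \<in> e})"
      unfolding eq by (rule card_UN_disjoint) (use finN disj in auto)
    also have "\<dots> \<le> (\<Sum>i\<in>{1..b}. 1)"
      by (rule sum_mono) (use N(2) in \<open>auto simp: matching_def\<close>)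
    finally show "card {e\<in>M. v \<in> e} \<le> b" by simp
  qed
  thus ?thesis using sub cardM by blast
qed


lemma sumq:
  fixes p :: real and b :: nat
  shows "(\<Sum>j\<in>{..b}. (if j = 0 then 1 - real b * p else p)) = 1"
proof -
  have "{..b} = insert 0 {1..b}" by auto
  hence "(\<Sum>j\<in>{..b}. (if j = 0 then 1 - real b * p else p))
        = (1 - real b * p) + (\<Sum>j\<in>{1..b}. (if j = 0 then 1 - real b * p else p))"
    by simp
  also have "(\<Sum>j\<in>{1..b}. (if j = 0 then 1 - real b * p else p)) = (\<Sum>j\<in>{1..b}. p)"
    by (rule sum.cong) auto
  finally show ?thesis by simp
qed

lemma weight_total:
  fixes E :: "'x set" and p :: real and b :: nat
  assumes fE: "finite E"
  shows "(\<Sum>c\<in>PiE E (\<lambda>_. {..b}). \<Prod>e\<in>E. (if c e = 0 then 1 - real b * p else p)) = 1"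
proof -
  have "(\<Sum>c\<in>PiE E (\<lambda>_. {..b}). \<Prod>e\<in>E. (if c e = 0 then 1 - real b * p else p))
      = (\<Prod>e\<in>E. \<Sum>j\<in>{..b}. (if j = 0 then 1 - real b * p else p))"
    by (rule prod_sum_PiE[symmetric]) (use fE in auto)
  also have "\<dots> = 1" using sumq[of b p] by simp
  finally show ?thesis .
qed

lemma weight_marg:
  fixes E :: "'x set" and p :: real and b i :: nat and f :: "'x set \<Rightarrow> real"
  assumes fE: "finite E" and i: "1 \<le> i" "i \<le> b"
  shows "(\<Sum>c\<in>PiE E (\<lambda>_. {..b}). (\<Prod>e\<in>E. (if c e = 0 then 1 - real b * p else p)) * f {e\<in>E. c e = i})
       = (\<Sum>F\<in>Pow E. p ^ card F * (1 - p) ^ card (E - F) * f F)"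
proof -
  define q where "q = (\<lambda>j::nat. if j = 0 then 1 - real b * p else p)"
  define PE where "PE = PiE E (\<lambda>_. {..b})"
  define W where "W = (\<lambda>c. \<Prod>e\<in>E. q (c e))"
  have finPE: "finite PE" unfolding PE_def using fE by (simp add: finite_PiE)
  have "(\<Sum>c\<in>PE. W c * f {e\<in>E. c e = i})
     = (\<Sum>F\<in>Pow E. \<Sum>c\<in>{c. c \<in> PE \<and> {e\<in>E. c e = i} = F}. W c * f {e\<in>E. c e = i})"
    by (rule sum.group[symmetric]) (use finPE fE in auto)
  also have "\<dots> = (\<Sum>F\<in>Pow E. p ^ card F * (1 - p) ^ card (E - F) * f F)"
  proof (rule sum.cong[OF refl])
    fix F assume F: "F \<in> Pow E"
    define B where "B = (\<lambda>e. if e \<in> F then {i} else {..b} - {i})"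
    have seteq: "{c. c \<in> PE \<and> {e\<in>E. c e = i} = F} = PiE E B"
    proof (rule set_eqI)
      fix c
      show "c \<in> {c. c \<in> PE \<and> {e\<in>E. c e = i} = F} \<longleftrightarrow> c \<in> PiE E B"
        using F i unfolding PE_def B_def by (auto simp: PiE_iff split: if_splits)
    qed
    have "(\<Sum>c\<in>{c. c \<in> PE \<and> {e\<in>E. c e = i} = F}. W c * f {e\<in>E. c e = i})
        = (\<Sum>c\<in>PiE E B. W c * f F)"
      by (rule sum.cong) (auto simp: seteq[symmetric])
    also have "\<dots> = (\<Sum>c\<in>PiE E B. W c) * f F" by (simp add: sum_distrib_right)
    also have "(\<Sum>c\<in>PiE E B. W c) = (\<Prod>e\<in>E. \<Sum>j\<in>B e. q j)"
      unfolding W_def by (rule prod_sum_PiE[symmetric]) (use fE in \<open>auto simp: B_def\<close>)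
    also have "\<dots> = (\<Prod>e\<in>E. if e \<in> F then p else 1 - p)"
    proof (rule prod.cong[OF refl])
      fix e assume "e \<in> E"
      have s1: "(\<Sum>j\<in>{..b} - {i}. q j) = 1 - p"
        using sumq[of b p] i by (simp add: sum_diff1 q_def)
      show "(\<Sum>j\<in>B e. q j) = (if e \<in> F then p else 1 - p)"
        using i s1 by (simp add: B_def q_def)
    qed
    also have "\<dots> = p ^ card F * (1 - p) ^ card (E - F)"
    proof -
      have "E \<inter> {x. x \<in> F} = F" "E \<inter> - {x. x \<in> F} = E - F" using F by auto
      thus ?thesis using fE by (simp add: prod.If_cases)
    qed
    finally show "(\<Sum>c\<in>{c. c \<in> PE \<and> {e\<in>E. c e = i} = F}. W c * f {e\<in>E. c e = i})
        = p ^ card F * (1 - p) ^ card (E - F) * f F" .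
  qed
  finally show ?thesis unfolding PE_def W_def q_def .
qed


theorem mainTheorem4:
  fixes V :: "'a set" and E :: "'a set set" and p :: real
  assumes "simple_graph V E" and "0 < p" and "p < 1"
  shows "\<exists>M\<subseteq>E. b_matching (nat \<lfloor>1 / p\<rfloor>) M \<and>
           real (card M) \<ge> (real_of_int \<lfloor>1 / p\<rfloor> - 1) * expected_mu E p"
proof -
  define b where "b = nat \<lfloor>1 / p\<rfloor>"
  have p1: "1 < 1 / p" using assms(2,3) by (simp add: field_simps)
  have fl: "1 \<le> \<lfloor>1 / p\<rfloor>" using p1 by linarith
  have rb: "real_of_int \<lfloor>1 / p\<rfloor> = real b" unfolding b_def by (metis fl nat_0_le of_int_of_nat_eq order_trans zero_le_one)
  have b1: "1 \<le> b" unfolding b_def using fl by linarith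
  have "real b \<le> 1 / p" using rb by linarith
  hence bp: "real b * p \<le> 1" using assms(2) by (simp add: field_simps)
  have fE: "finite E"
  proof -
    have "E \<subseteq> Pow V" using assms(1) unfolding simple_graph_def by blast
    moreover have "finite V" using assms(1) unfolding simple_graph_def by blast
    ultimately show ?thesis by (meson finite_Pow_iff finite_subset)
  qed
  define q where "q = (\<lambda>j::nat. if j = 0 then 1 - real b * p else p)"
  define PE where "PE = PiE E (\<lambda>_. {..b})"
  define W where "W = (\<lambda>c. \<Prod>e\<in>E. q (c e))"
  define g where "g = (\<lambda>c. real (\<Sum>i\<in>{1..b}. mu {e\<in>E. c e = i}))"
  have finPE: "finite PE" unfolding PE_def using fE by (simp add: finite_PiE)
  have nePE: "PE \<noteq> {}" unfolding PE_def by (simp add: PiE_eq_empty_iff)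
  have Wnn: "W c \<ge> 0" for c
    unfolding W_def q_def using bp assms(2) by (intro prod_nonneg) auto
  have Wsum: "(\<Sum>c\<in>PE. W c) = 1"
    unfolding PE_def W_def q_def by (rule weight_total[OF fE])
  have "(\<Sum>c\<in>PE. W c * g c) = (\<Sum>c\<in>PE. \<Sum>i\<in>{1..b}. W c * real (mu {e\<in>E. c e = i}))"
    unfolding g_def by (simp add: sum_distrib_left)
  also have "\<dots> = (\<Sum>i\<in>{1..b}. \<Sum>c\<in>PE. W c * real (mu {e\<in>E. c e = i}))"
    by (rule sum.swap)
  also have "\<dots> = (\<Sum>i\<in>{1..b}. expected_mu E p)"
  proof (rule sum.cong[OF refl])
    fix i assume "i \<in> {1..b}"
    hence i: "1 \<le> i" "i \<le> b" by auto
    show "(\<Sum>c\<in>PE. W c * real (mu {e\<in>E. c e = i})) = expected_mu E p"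
      unfolding PE_def W_def q_def expected_mu_def
      by (rule weight_marg[OF fE i, of p "\<lambda>F. real (mu F)"])
  qed
  also have "\<dots> = real b * expected_mu E p" by simp
  finally have avg: "(\<Sum>c\<in>PE. W c * g c) = real b * expected_mu E p" .
  obtain c0 where c0: "c0 \<in> PE" "\<And>c. c \<in> PE \<Longrightarrow> g c \<le> g c0"
  proof -
    have "Max (g ` PE) \<in> g ` PE" using finPE nePE by simp
    then obtain c0 where "c0 \<in> PE" "g c0 = Max (g ` PE)" by auto
    moreover have "\<And>c. c \<in> PE \<Longrightarrow> g c \<le> Max (g ` PE)" using finPE by simp
    ultimately show ?thesis using that by metis
  qed
  have "(\<Sum>c\<in>PE. W c * g c) \<le> (\<Sum>c\<in>PE. W c * g c0)"
    by (rule sum_mono) (use c0 Wnn in \<open>auto intro: mult_left_mono\<close>)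
  also have "\<dots> = g c0" using Wsum by (simp add: sum_distrib_right[symmetric])
  finally have key: "real b * expected_mu E p \<le> g c0" using avg by simp
  obtain M where M: "M \<subseteq> E" "b_matching b M" "card M = (\<Sum>i\<in>{1..b}. mu {e\<in>E. c0 e = i})"
    using combine[OF fE, of b c0] by blast
  have opt: "expected_mu E p \<ge> 0"
    unfolding expected_mu_def using assms(2,3) by (intro sum_nonneg) auto
  have "(real_of_int \<lfloor>1 / p\<rfloor> - 1) * expected_mu E p \<le> real b * expected_mu E p"
    unfolding rb using opt by (simp add: mult_right_mono)
  also have "\<dots> \<le> real (card M)" using key M(3) unfolding g_def by simp
  finally show ?thesis using M(1,2) unfolding b_def by blast
qed

end
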